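(* Let $K\ge3$. If for all $k\in[K]$ there is a function $g_k$ (defined on $[0,1]$) with $f_k({\bm{p}})=g_k\!\left(\frac{p_k}{|{\bm{p}}|}\right)$ for all ${\bm{p}}\in\mathbb{R}^K_{\ge0}\setminus\{\mathbf{0}\}$, then the Conservation Condition $$(f_1({\bm{p}}),\dots,f_K({\bm{p}}))=\nabla L^{\mathrm{same}}({\bm{p}})\quad\text{for all }{\bm{p}}\in\mathbb{R}^K_{\ge0}\setminus\{\mathbf{0}\}$$ holds if and only if all $g_k$ are constant functions.
   Context: Setting: distributions $\mathcal{D}_1,\dots,\mathcal{D}_K$ on $\mathcal{Z}$, a loss $\ell(h,{\bm{z}})$, $N\ge1$, and a learning algorithm $\mathcal{A}:\mathcal{Z}^N\to\mathcal{H}$. For ${\bm{q}}\in\Delta_K=\{{\bm{r}}\ge0:\sum_kr_k=1\}$ let $\mathcal{D}_{\bm{q}}=\sum_kq_k\mathcal{D}_k$ and $\bar e_k({\bm{q}})=\mathbb{E}_{S\sim\mathcal{D}_{\bm{q}}^N}\mathbb{E}_{{\bm{z}}\sim\mathcal{D}_k}[\ell(\mathcal{A}(S),{\bm{z}})]$. For ${\bm{p}}\in\mathbb{R}^K_{\ge0}\setminus\{\mathbf{0}\}$, $|{\bm{p}}|=\sum_kp_k$, $f_k({\bm{p}})=\bar e_k({\bm{p}}/|{\bm{p}}|)$ and $L^{\mathrm{same}}({\bm{p}})=\sum_kp_kf_k({\bm{p}})$. *)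

theory Defs
  imports "HOL-Probability.Probability"
begin

text \<open>Index set [K] is modelled by a finite type 'k, so K = CARD('k).\<close>

definition prob_simplex :: "(real^'k) set" where
  "prob_simplex = {q. (\<forall>k. 0 \<le> q$k) \<and> (\<Sum>k\<in>UNIV. q$k) = 1}"

definition posorth :: "(real^'k) set" where
  "posorth = {p. (\<forall>k. 0 \<le> p$k) \<and> p \<noteq> 0}"

definition mass :: "real^'k \<Rightarrow> real" where
  "mass p = (\<Sum>k\<in>UNIV. p$k)"

definition mixture :: "'z measure \<Rightarrow> ('k::finite \<Rightarrow> 'z measure) \<Rightarrow> real^'k \<Rightarrow> 'z measure" where
  "mixture M D q = measure_of (space M) (sets M)
     (\<lambda>A. \<Sum>k\<in>UNIV. ennreal (q$k) * emeasure (D k) A)"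

definition ebar :: "'z measure \<Rightarrow> ('k::finite \<Rightarrow> 'z measure) \<Rightarrow> nat \<Rightarrow> ('h \<Rightarrow> 'z \<Rightarrow> real)
    \<Rightarrow> ((nat \<Rightarrow> 'z) \<Rightarrow> 'h) \<Rightarrow> 'k \<Rightarrow> real^'k \<Rightarrow> real" where
  "ebar M D N loss Alg k q =
     (\<integral>S. (\<integral>z. loss (Alg S) z \<partial>(D k)) \<partial>(PiM {..<N} (\<lambda>_. mixture M D q)))"

definition ffun :: "'z measure \<Rightarrow> ('k::finite \<Rightarrow> 'z measure) \<Rightarrow> nat \<Rightarrow> ('h \<Rightarrow> 'z \<Rightarrow> real)
    \<Rightarrow> ((nat \<Rightarrow> 'z) \<Rightarrow> 'h) \<Rightarrow> 'k \<Rightarrow> real^'k \<Rightarrow> real" where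
  "ffun M D N loss Alg k p = ebar M D N loss Alg k ((1 / mass p) *\<^sub>R p)"

definition Lsame :: "'z measure \<Rightarrow> ('k::finite \<Rightarrow> 'z measure) \<Rightarrow> nat \<Rightarrow> ('h \<Rightarrow> 'z \<Rightarrow> real)
    \<Rightarrow> ((nat \<Rightarrow> 'z) \<Rightarrow> 'h) \<Rightarrow> real^'k \<Rightarrow> real" where
  "Lsame M D N loss Alg p = (\<Sum>k\<in>UNIV. p$k * ffun M D N loss Alg k p)"

definition conservation :: "'z measure \<Rightarrow> ('k::finite \<Rightarrow> 'z measure) \<Rightarrow> nat \<Rightarrow> ('h \<Rightarrow> 'z \<Rightarrow> real)
    \<Rightarrow> ((nat \<Rightarrow> 'z) \<Rightarrow> 'h) \<Rightarrow> bool" where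
  "conservation M D N loss Alg \<longleftrightarrow>
     (\<forall>p\<in>posorth. (Lsame M D N loss Alg has_derivative
         (\<lambda>h. \<Sum>k\<in>UNIV. ffun M D N loss Alg k p * h$k)) (at p within posorth))"

end

theory Submission
  imports Defs
begin


lemma mix_sets: "sets (mixture M D q) = sets M"
  unfolding mixture_def by (simp add: sets_measure_of[OF sets.space_closed])

lemma mix_space: "space (mixture M D q) = space M"
  unfolding mixture_def by (simp add: space_measure_of_conv)

lemma mix_emeasure:
  fixes D :: "'k::finite \<Rightarrow> 'z measure"
  assumes q: "\<And>k. 0 \<le> q$k" and sD: "\<And>k. sets (D k) = sets M" and A: "A \<in> sets M"
  shows "emeasure (mixture M D q) A = (\<Sum>k\<in>UNIV. ennreal (q$k) * emeasure (D k) A)"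
  unfolding mixture_def
proof (rule emeasure_measure_of_sigma[OF sets.sigma_algebra_axioms _ _ A])
  show "positive (sets M) (\<lambda>A. \<Sum>k\<in>UNIV. ennreal (q$k) * emeasure (D k) A)"
    by (simp add: positive_def)
  show "countably_additive (sets M) (\<lambda>A. \<Sum>k\<in>UNIV. ennreal (q$k) * emeasure (D k) A)"
    unfolding countably_additive_def
  proof (intro allI impI)
    fix F :: "nat \<Rightarrow> 'z set"
    assume F: "range F \<subseteq> sets M" "disjoint_family F" "\<Union> (range F) \<in> sets M"
    have "(\<Sum>i. \<Sum>k\<in>UNIV. ennreal (q$k) * emeasure (D k) (F i))
        = (\<Sum>k\<in>UNIV. \<Sum>i. ennreal (q$k) * emeasure (D k) (F i))"
      by (rule suminf_sum) (rule summableI)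
    also have "\<dots> = (\<Sum>k\<in>UNIV. ennreal (q$k) * emeasure (D k) (\<Union> (range F)))"
      using F by (simp add: suminf_emeasure sD)
    finally show "(\<Sum>i. \<Sum>k\<in>UNIV. ennreal (q$k) * emeasure (D k) (F i))
        = (\<Sum>k\<in>UNIV. ennreal (q$k) * emeasure (D k) (\<Union> (range F)))" .
  qed
qed

lemma mix_prob:
  fixes D :: "'k::finite \<Rightarrow> 'z measure"
  assumes q: "q \<in> prob_simplex" and sD: "\<And>k. sets (D k) = sets M" and P: "\<And>k. prob_space (D k)"
  shows "prob_space (mixture M D q)"
proof
  have q0: "\<And>k. 0 \<le> q$k" and q1: "(\<Sum>k\<in>UNIV. q$k) = 1" using q by (auto simp: prob_simplex_def)
  have sp: "\<And>k. space (D k) = space M" using sD sets_eq_imp_space_eq by blast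
  have "emeasure (mixture M D q) (space M) = (\<Sum>k\<in>UNIV. ennreal (q$k) * emeasure (D k) (space M))"
    by (rule mix_emeasure[OF q0 sD sets.top])
  also have "\<dots> = (\<Sum>k\<in>UNIV. ennreal (q$k))"
  proof -
    have "\<And>k. emeasure (D k) (space M) = 1" using P sp prob_space.emeasure_space_1 by metis
    then show ?thesis by simp
  qed
  also have "\<dots> = ennreal (\<Sum>k\<in>UNIV. q$k)" using q0 by (simp add: sum_ennreal)
  finally show "emeasure (mixture M D q) (space (mixture M D q)) = 1" using q1 by (simp add: mix_space)
qed

lemma mix_le:
  fixes D :: "'k::finite \<Rightarrow> 'z measure"
  assumes q: "q \<in> prob_simplex" and sD: "\<And>k. sets (D k) = sets M"
  shows "mixture M D q \<le> scale_measure (of_nat CARD('k)) (mixture M D (\<chi> k. 1 / of_nat CARD('k)))"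
proof -
  let ?u = "(\<chi> k. 1 / of_nat CARD('k)) :: real^'k"
  have q0: "\<And>k. 0 \<le> q$k" and q1: "(\<Sum>k\<in>UNIV. q$k) = 1" using q by (auto simp: prob_simplex_def)
  have qle: "\<And>k. q$k \<le> 1"
  proof -
    fix k
    have "q$k \<le> (\<Sum>k\<in>UNIV. q$k)" by (rule member_le_sum) (auto simp: q0)
    then show "q$k \<le> 1" using q1 by simp
  qed
  have u0: "\<And>k. 0 \<le> ?u$k" by simp
  show ?thesis
    unfolding le_measure_iff
  proof (simp add: mix_space mix_sets space_scale_measure le_fun_def, intro allI)
    fix A
    show "emeasure (mixture M D q) A \<le> of_nat CARD('k) * emeasure (mixture M D ?u) A"
    proof (cases "A \<in> sets M")
      case True
      have "emeasure (mixture M D q) A = (\<Sum>k\<in>UNIV. ennreal (q$k) * emeasure (D k) A)"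
        by (rule mix_emeasure[OF q0 sD True])
      also have "\<dots> \<le> (\<Sum>k\<in>UNIV. emeasure (D k) A)"
        by (intro sum_mono) (metis qle ennreal_le_1 mult_left_le_one_le mult_1 mult_right_mono zero_le)
      also have "\<dots> = of_nat CARD('k) * (\<Sum>k\<in>UNIV. ennreal (?u$k) * emeasure (D k) A)"
      proof -
        have c: "(of_nat CARD('k) :: ennreal) * ennreal (1 / of_nat CARD('k)) = 1"
          by (simp add: ennreal_of_nat_eq_real_of_nat ennreal_mult''[symmetric])
        have "of_nat CARD('k) * (\<Sum>k\<in>UNIV. ennreal (?u$k) * emeasure (D k) A)
            = (\<Sum>k\<in>UNIV. ((of_nat CARD('k) :: ennreal) * ennreal (1 / of_nat CARD('k))) * emeasure (D k) A)"
          by (simp add: sum_distrib_left mult.assoc)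
        then show ?thesis using c by simp
      qed
      also have "\<dots> = of_nat CARD('k) * emeasure (mixture M D ?u) A"
        by (simp only: mix_emeasure[OF u0 sD True])
      finally show ?thesis .
    next
      case False
      then show ?thesis by (simp add: emeasure_notin_sets mix_sets)
    qed
  qed
qed



lemma prod_le:
  fixes A B :: "'z measure" and c :: ennreal
  assumes I: "finite I" and sAB: "sets A = sets B" and sfA: "sigma_finite_measure A"
    and sfB: "sigma_finite_measure B" and le: "A \<le> scale_measure c B"
  shows "h \<in> borel_measurable (PiM I (\<lambda>_. B)) \<Longrightarrow>
    (\<integral>\<^sup>+x. h x \<partial>PiM I (\<lambda>_. A)) \<le> c ^ card I * (\<integral>\<^sup>+x. h x \<partial>PiM I (\<lambda>_. B))"
  using I
proof (induction I arbitrary: h rule: finite_induct)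
  case empty
  have "PiM {} (\<lambda>_. A) = PiM {} (\<lambda>_. B)" by (simp add: PiM_empty)
  then show ?case by (metis card.empty mult_1 order_refl power_0)
next
  case (insert i I)
  interpret PA: product_sigma_finite "\<lambda>_. A" by (simp add: product_sigma_finite_def sfA)
  interpret PB: product_sigma_finite "\<lambda>_. B" by (simp add: product_sigma_finite_def sfB)
  interpret SB: sigma_finite_measure B by (rule sfB)
  have sPi: "\<And>J. sets (PiM J (\<lambda>_. A)) = sets (PiM J (\<lambda>_. B))"
    by (rule sets_PiM_cong) (auto simp: sAB)
  have hB[measurable]: "h \<in> borel_measurable (PiM (insert i I) (\<lambda>_. B))" by fact
  have hA: "h \<in> borel_measurable (PiM (insert i I) (\<lambda>_. A))"
    using hB measurable_cong_sets[OF sPi refl] by blast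
  have inner: "\<And>x. x \<in> space (PiM I (\<lambda>_. A)) \<Longrightarrow>
      (\<integral>\<^sup>+y. h (x(i := y)) \<partial>A) \<le> c * (\<integral>\<^sup>+y. h (x(i := y)) \<partial>B)"
  proof -
    fix x assume x: "x \<in> space (PiM I (\<lambda>_. A))"
    have xB: "x \<in> space (PiM I (\<lambda>_. B))" using x sets_eq_imp_space_eq[OF sPi[of I]] by simp
    have m: "(\<lambda>y. h (x(i := y))) \<in> borel_measurable B"
      using measurable_comp[OF measurable_component_update hB, OF xB \<open>i \<notin> I\<close>] by (simp add: comp_def fun_upd_def)
    have "(\<integral>\<^sup>+y. h (x(i := y)) \<partial>A) \<le> (\<integral>\<^sup>+y. h (x(i := y)) \<partial>scale_measure c B)"
      by (rule nn_integral_mono_measure) (simp_all add: sAB le)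
    also have "\<dots> = c * (\<integral>\<^sup>+y. h (x(i := y)) \<partial>B)"
      by (rule nn_integral_scale_measure[OF m])
    finally show "(\<integral>\<^sup>+y. h (x(i := y)) \<partial>A) \<le> c * (\<integral>\<^sup>+y. h (x(i := y)) \<partial>B)" .
  qed
  have mg: "(\<lambda>x. c * (\<integral>\<^sup>+y. h (x(i := y)) \<partial>B)) \<in> borel_measurable (PiM I (\<lambda>_. B))"
    by measurable
  have "(\<integral>\<^sup>+x. h x \<partial>PiM (insert i I) (\<lambda>_. A))
      = (\<integral>\<^sup>+x. (\<integral>\<^sup>+y. h (x(i := y)) \<partial>A) \<partial>PiM I (\<lambda>_. A))"
    by (rule PA.product_nn_integral_insert[OF insert(1,2) hA])
  also have "\<dots> \<le> (\<integral>\<^sup>+x. c * (\<integral>\<^sup>+y. h (x(i := y)) \<partial>B) \<partial>PiM I (\<lambda>_. A))"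
    by (rule nn_integral_mono) (rule inner)
  also have "\<dots> \<le> c ^ card I * (\<integral>\<^sup>+x. c * (\<integral>\<^sup>+y. h (x(i := y)) \<partial>B) \<partial>PiM I (\<lambda>_. B))"
    by (rule insert.IH[OF mg])
  also have "\<dots> = c ^ card I * c * (\<integral>\<^sup>+x. (\<integral>\<^sup>+y. h (x(i := y)) \<partial>B) \<partial>PiM I (\<lambda>_. B))"
    by (subst nn_integral_cmult) (auto simp: mult.assoc)
  also have "\<dots> = c ^ card (insert i I) * (\<integral>\<^sup>+x. h x \<partial>PiM (insert i I) (\<lambda>_. B))"
    using insert(1,2) by (simp add: PB.product_nn_integral_insert[OF insert(1,2) hB] mult.commute)
  finally show ?case .
qed



lemma ebar_bounded:
  fixes M :: "'z measure" and D :: "'k::finite \<Rightarrow> 'z measure" and N :: nat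
    and loss :: "'h \<Rightarrow> 'z \<Rightarrow> real" and Alg :: "(nat \<Rightarrow> 'z) \<Rightarrow> 'h"
  assumes prob: "\<And>k. prob_space (D k)"
    and sets_D: "\<And>k. sets (D k) = sets M"
    and integ: "\<And>q k. q \<in> prob_simplex \<Longrightarrow>
        integrable (PiM {..<N} (\<lambda>_. mixture M D q) \<Otimes>\<^sub>M D k) (\<lambda>(S, z). loss (Alg S) z)"
  shows "\<exists>C. \<forall>q\<in>prob_simplex. \<bar>ebar M D N loss Alg k q\<bar> \<le> C"
proof -
  let ?u = "(\<chi> k. 1 / of_nat CARD('k)) :: real^'k"
  let ?F = "\<lambda>S. \<integral>z. loss (Alg S) z \<partial>(D k)"
  let ?mu = "\<lambda>q. PiM {..<N} (\<lambda>_. mixture M D q)"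
  have u: "?u \<in> prob_simplex" by (simp add: prob_simplex_def)
  interpret PU: prob_space "?mu ?u"
    by (rule prob_space_PiM) (rule mix_prob[OF u sets_D prob])
  interpret DK: prob_space "D k" by (rule prob)
  interpret PS: pair_sigma_finite "?mu ?u" "D k" ..
  have Fint: "integrable (?mu ?u) ?F"
    using PS.integrable_fst'[OF integ[OF u, of k]] by simp
  then have Fm: "?F \<in> borel_measurable (?mu ?u)" by auto
  define C where "C = real (CARD('k) ^ N) * (\<integral>S. norm (?F S) \<partial>?mu ?u)"
  have C0: "0 \<le> C" unfolding C_def by simp
  show ?thesis
  proof (intro exI ballI)
    fix q :: "real^'k" assume q: "q \<in> prob_simplex"
    have "(\<integral>\<^sup>+S. ennreal (norm (?F S)) \<partial>?mu q)
        \<le> of_nat CARD('k) ^ card {..<N} * (\<integral>\<^sup>+S. ennreal (norm (?F S)) \<partial>?mu ?u)"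
    proof (rule prod_le)
      show "sets (mixture M D q) = sets (mixture M D ?u)" by (simp add: mix_sets)
      show "sigma_finite_measure (mixture M D q)"
        using mix_prob[OF q sets_D prob] by (simp add: prob_space_imp_sigma_finite)
      show "sigma_finite_measure (mixture M D ?u)"
        using mix_prob[OF u sets_D prob] by (simp add: prob_space_imp_sigma_finite)
      show "mixture M D q \<le> scale_measure (of_nat CARD('k)) (mixture M D ?u)"
        by (rule mix_le[OF q sets_D])
      show "(\<lambda>S. ennreal (norm (?F S))) \<in> borel_measurable (?mu ?u)"
        using Fm by measurable
    qed simp
    also have "\<dots> = ennreal C"
    proof -
      have e: "(\<integral>\<^sup>+S. ennreal (norm (?F S)) \<partial>?mu ?u) = ennreal (\<integral>S. norm (?F S) \<partial>?mu ?u)"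
        by (rule nn_integral_eq_integral[OF integrable_norm[OF Fint]]) simp
      show ?thesis unfolding C_def e
        by (simp add: ennreal_mult ennreal_of_nat_eq_real_of_nat ennreal_power)
    qed
    finally have le: "(\<integral>\<^sup>+S. ennreal (norm (?F S)) \<partial>?mu q) \<le> ennreal C" .
    have "\<bar>ebar M D N loss Alg k q\<bar> = norm (\<integral>S. ?F S \<partial>?mu q)" by (simp add: ebar_def)
    also have "\<dots> \<le> (\<integral>S. norm (?F S) \<partial>?mu q)" by (rule integral_norm_bound)
    also have "\<dots> \<le> C" by (rule integral_real_bounded[OF C0 le])
    finally show "\<bar>ebar M D N loss Alg k q\<bar> \<le> C" .
  qed
qed



definition uv :: "'k::finite \<Rightarrow> real^'k" where "uv i = (\<chi> k. if k = i then 1 else 0)"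

lemma uv_nth [simp]: "uv i $ k = (if k = i then 1 else 0)"
  by (simp add: uv_def)

lemma mass_add [simp]: "mass (p + q) = mass p + mass q"
  by (simp add: mass_def sum.distrib)
lemma mass_scale [simp]: "mass (c *\<^sub>R p) = c * mass p"
  by (simp add: mass_def sum_distrib_left)
lemma mass_uv [simp]: "mass (uv i) = 1"
  by (simp add: mass_def)
lemma mass_zero [simp]: "mass 0 = 0"
  by (simp add: mass_def)

lemma posorthI:
  assumes "\<And>k. 0 \<le> p$k" "mass p > 0"
  shows "p \<in> posorth"
  using assms unfolding posorth_def by auto

lemma posorth_comp: "p \<in> posorth \<Longrightarrow> 0 \<le> p$k"
  by (simp add: posorth_def)

lemma posorth_mass_ge: "p \<in> posorth \<Longrightarrow> p$k \<le> mass p"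
  unfolding mass_def posorth_def by (auto intro!: member_le_sum)

lemma posorth_mass_pos: "p \<in> posorth \<Longrightarrow> 0 < mass p"
proof -
  assume p: "p \<in> posorth"
  have "\<exists>k. p$k \<noteq> 0" using p unfolding posorth_def by (auto simp: vec_eq_iff)
  then obtain k where "p$k \<noteq> 0" by blast
  then have "0 < p$k" using posorth_comp[OF p, of k] by simp
  then show ?thesis using posorth_mass_ge[OF p, of k] by simp
qed

lemma deriv_line:
  fixes L :: "real^'k::finite \<Rightarrow> real" and f :: "'k \<Rightarrow> real^'k \<Rightarrow> real"
  assumes cons: "\<forall>p\<in>posorth. (L has_derivative (\<lambda>h. \<Sum>k\<in>UNIV. f k p * h$k)) (at p within posorth)"
    and S: "\<And>t. t \<in> S \<Longrightarrow> p0 + t *\<^sub>R v \<in> posorth" and t: "t \<in> S"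
  shows "((\<lambda>t. L (p0 + t *\<^sub>R v)) has_field_derivative (\<Sum>k\<in>UNIV. f k (p0 + t *\<^sub>R v) * v$k)) (at t within S)"
proof -
  have d: "((\<lambda>t. p0 + t *\<^sub>R v) has_derivative (\<lambda>h. h *\<^sub>R v)) (at t within S)"
    by (auto intro!: derivative_eq_intros)
  have "((\<lambda>t. L (p0 + t *\<^sub>R v)) has_derivative
      (\<lambda>h. \<Sum>k\<in>UNIV. f k (p0 + t *\<^sub>R v) * (h *\<^sub>R v)$k)) (at t within S)"
    by (rule has_derivative_in_compose2[of posorth L _ "\<lambda>t. p0 + t *\<^sub>R v" S t])
       (use cons S t d in \<open>blast, blast, blast, blast\<close>)
  then show ?thesis
    unfolding has_field_derivative_def
    by (rule has_derivative_eq_rhs) (simp add: fun_eq_iff sum_distrib_left algebra_simps)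
qed

lemma deriv_line_uv:
  fixes L :: "real^'k::finite \<Rightarrow> real" and f :: "'k \<Rightarrow> real^'k \<Rightarrow> real"
  assumes cons: "\<forall>p\<in>posorth. (L has_derivative (\<lambda>h. \<Sum>k\<in>UNIV. f k p * h$k)) (at p within posorth)"
    and S: "\<And>t. t \<in> S \<Longrightarrow> p0 + t *\<^sub>R uv j \<in> posorth" and t: "t \<in> S"
  shows "((\<lambda>t. L (p0 + t *\<^sub>R uv j)) has_field_derivative f j (p0 + t *\<^sub>R uv j)) (at t within S)"
proof -
  have "(\<Sum>k\<in>UNIV. f k (p0 + t *\<^sub>R uv j) * uv j $ k) = f j (p0 + t *\<^sub>R uv j)"
    by (simp add: mult.commute[of "f _ _"] if_distrib sum.delta cong: if_cong)
  then show ?thesis using deriv_line[OF cons S t] by simp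
qed


lemma claimA:
  fixes L :: "real^'k::finite \<Rightarrow> real" and f :: "'k \<Rightarrow> real^'k \<Rightarrow> real" and g :: "'k \<Rightarrow> real \<Rightarrow> real"
  assumes cons: "\<forall>p\<in>posorth. (L has_derivative (\<lambda>h. \<Sum>k\<in>UNIV. f k p * h$k)) (at p within posorth)"
    and grep: "\<And>k p. p \<in> posorth \<Longrightarrow> f k p = g k (p$k / mass p)"
    and ne: "a \<noteq> j" "a \<noteq> b" and yz: "0 \<le> y" "0 \<le> z" "0 < y + z" and t: "0 \<le> t"
  shows "L ((y *\<^sub>R uv j + z *\<^sub>R uv b) + t *\<^sub>R uv a) - L ((y+z) *\<^sub>R uv j + t *\<^sub>R uv a)
       = L (y *\<^sub>R uv j + z *\<^sub>R uv b) - L ((y+z) *\<^sub>R uv j)"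
proof -
  define P where "P = y *\<^sub>R uv j + z *\<^sub>R uv b"
  define Q where "Q = (y+z) *\<^sub>R uv j"
  have memP: "\<And>s. s \<in> {0..} \<Longrightarrow> P + s *\<^sub>R uv a \<in> posorth"
    unfolding P_def using yz by (intro posorthI) simp_all
  have memQ: "\<And>s. s \<in> {0..} \<Longrightarrow> Q + s *\<^sub>R uv a \<in> posorth"
    unfolding Q_def using yz by (intro posorthI) simp_all
  have fP: "\<And>s. s \<in> {0..} \<Longrightarrow> f a (P + s *\<^sub>R uv a) = g a (s / (y + z + s))"
    using ne grep[OF memP] unfolding P_def by simp
  have fQ: "\<And>s. s \<in> {0..} \<Longrightarrow> f a (Q + s *\<^sub>R uv a) = g a (s / (y + z + s))"
    using ne grep[OF memQ] unfolding Q_def by simp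
  have "\<And>s. s \<in> {0..} \<Longrightarrow> ((\<lambda>s. L (P + s *\<^sub>R uv a) - L (Q + s *\<^sub>R uv a)) has_field_derivative 0) (at s within {0..})"
  proof -
    fix s :: real assume s: "s \<in> {0..}"
    have "((\<lambda>s. L (P + s *\<^sub>R uv a) - L (Q + s *\<^sub>R uv a)) has_field_derivative
        f a (P + s *\<^sub>R uv a) - f a (Q + s *\<^sub>R uv a)) (at s within {0..})"
      by (intro DERIV_diff deriv_line_uv[OF cons] memP memQ s)
    then show "((\<lambda>s. L (P + s *\<^sub>R uv a) - L (Q + s *\<^sub>R uv a)) has_field_derivative 0) (at s within {0..})"
      using fP[OF s] fQ[OF s] by simp
  qed
  from has_field_derivative_zero_constant[OF convex_real_interval(1) this]
  obtain c where c: "\<forall>s\<in>{0..}. L (P + s *\<^sub>R uv a) - L (Q + s *\<^sub>R uv a) = c"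
    by blast
  have c1: "L (P + t *\<^sub>R uv a) - L (Q + t *\<^sub>R uv a) = c" using c t by blast
  have c2: "L (P + 0 *\<^sub>R uv a) - L (Q + 0 *\<^sub>R uv a) = c" using bspec[OF c, of 0] by simp
  have "L (P + t *\<^sub>R uv a) - L (Q + t *\<^sub>R uv a) = L (P + 0 *\<^sub>R uv a) - L (Q + 0 *\<^sub>R uv a)"
    using c1 c2 by simp
  then show ?thesis by (simp add: P_def Q_def)
qed


lemma claimB:
  fixes L :: "real^'k::finite \<Rightarrow> real" and f :: "'k \<Rightarrow> real^'k \<Rightarrow> real" and g :: "'k \<Rightarrow> real \<Rightarrow> real"
  assumes cons: "\<forall>p\<in>posorth. (L has_derivative (\<lambda>h. \<Sum>k\<in>UNIV. f k p * h$k)) (at p within posorth)"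
    and grep: "\<And>k p. p \<in> posorth \<Longrightarrow> f k p = g k (p$k / mass p)"
    and ne: "a \<noteq> j" "a \<noteq> b" "j \<noteq> b" and t: "0 \<le> t" and z: "0 \<le> z" and y: "0 < y"
  shows "g j (y / (t + z + y)) - g j ((z + y) / (t + z + y)) = g j (y / (z + y)) - g j 1"
proof -
  define A1 where "A1 = t *\<^sub>R uv a + z *\<^sub>R uv b"
  define A2 where "A2 = t *\<^sub>R uv a + z *\<^sub>R uv j"
  define A3 where "A3 = z *\<^sub>R uv b"
  define A4 where "A4 = z *\<^sub>R uv j"
  let ?S = "{0::real<..}"
  have m1: "\<And>s. s \<in> ?S \<Longrightarrow> A1 + s *\<^sub>R uv j \<in> posorth"
    unfolding A1_def using t z by (intro posorthI) simp_all
  have m2: "\<And>s. s \<in> ?S \<Longrightarrow> A2 + s *\<^sub>R uv j \<in> posorth"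
    unfolding A2_def using t z by (intro posorthI) simp_all
  have m3: "\<And>s. s \<in> ?S \<Longrightarrow> A3 + s *\<^sub>R uv j \<in> posorth"
    unfolding A3_def using t z by (intro posorthI) simp_all
  have m4: "\<And>s. s \<in> ?S \<Longrightarrow> A4 + s *\<^sub>R uv j \<in> posorth"
    unfolding A4_def using t z by (intro posorthI) simp_all
  have yS: "y \<in> ?S" using y by simp
  have f1: "f j (A1 + y *\<^sub>R uv j) = g j (y / (t + z + y))"
    using ne grep[OF m1[OF yS]] unfolding A1_def by simp
  have f2: "f j (A2 + y *\<^sub>R uv j) = g j ((z + y) / (t + z + y))"
    using ne grep[OF m2[OF yS]] unfolding A2_def by (simp add: add.commute)
  have f3: "f j (A3 + y *\<^sub>R uv j) = g j (y / (z + y))"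
    using ne grep[OF m3[OF yS]] unfolding A3_def by simp
  have f4: "f j (A4 + y *\<^sub>R uv j) = g j 1"
    using ne y z grep[OF m4[OF yS]] unfolding A4_def by simp
  have eq: "\<And>s. s \<in> ?S \<Longrightarrow> L (A1 + s *\<^sub>R uv j) - L (A2 + s *\<^sub>R uv j) - (L (A3 + s *\<^sub>R uv j) - L (A4 + s *\<^sub>R uv j)) = 0"
  proof -
    fix s :: real assume s: "s \<in> ?S"
    have e1: "A1 + s *\<^sub>R uv j = (s *\<^sub>R uv j + z *\<^sub>R uv b) + t *\<^sub>R uv a"
      unfolding A1_def by (simp add: algebra_simps)
    have e2: "A2 + s *\<^sub>R uv j = (s + z) *\<^sub>R uv j + t *\<^sub>R uv a"
      unfolding A2_def by (simp add: algebra_simps)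
    have e3: "A3 + s *\<^sub>R uv j = s *\<^sub>R uv j + z *\<^sub>R uv b"
      unfolding A3_def by (simp add: algebra_simps)
    have e4: "A4 + s *\<^sub>R uv j = (s + z) *\<^sub>R uv j"
      unfolding A4_def by (simp add: algebra_simps)
    have "L ((s *\<^sub>R uv j + z *\<^sub>R uv b) + t *\<^sub>R uv a) - L ((s+z) *\<^sub>R uv j + t *\<^sub>R uv a)
       = L (s *\<^sub>R uv j + z *\<^sub>R uv b) - L ((s+z) *\<^sub>R uv j)"
      using s z t by (intro claimA[OF cons grep]) (use ne in auto)
    then show "L (A1 + s *\<^sub>R uv j) - L (A2 + s *\<^sub>R uv j) - (L (A3 + s *\<^sub>R uv j) - L (A4 + s *\<^sub>R uv j)) = 0"
      unfolding e1 e2 e3 e4 by simp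
  qed
  have "((\<lambda>s. L (A1 + s *\<^sub>R uv j) - L (A2 + s *\<^sub>R uv j) - (L (A3 + s *\<^sub>R uv j) - L (A4 + s *\<^sub>R uv j)))
      has_field_derivative (f j (A1 + y *\<^sub>R uv j) - f j (A2 + y *\<^sub>R uv j) - (f j (A3 + y *\<^sub>R uv j) - f j (A4 + y *\<^sub>R uv j)))) (at y within ?S)"
    by (intro DERIV_diff deriv_line_uv[OF cons] m1 m2 m3 m4 yS)
  then have "((\<lambda>s. 0) has_field_derivative (f j (A1 + y *\<^sub>R uv j) - f j (A2 + y *\<^sub>R uv j) - (f j (A3 + y *\<^sub>R uv j) - f j (A4 + y *\<^sub>R uv j)))) (at y within ?S)"
    by (rule has_field_derivative_transform_within[where d=1]) (use yS eq in auto)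
  then have "((\<lambda>s. 0) has_field_derivative (f j (A1 + y *\<^sub>R uv j) - f j (A2 + y *\<^sub>R uv j) - (f j (A3 + y *\<^sub>R uv j) - f j (A4 + y *\<^sub>R uv j)))) (at y)"
    using at_within_open[OF yS] by simp
  then have "f j (A1 + y *\<^sub>R uv j) - f j (A2 + y *\<^sub>R uv j) - (f j (A3 + y *\<^sub>R uv j) - f j (A4 + y *\<^sub>R uv j)) = 0"
    using DERIV_unique DERIV_const by blast
  then show ?thesis using f1 f2 f3 f4 by simp
qed


lemma two_others:
  assumes "CARD('k::finite) \<ge> 3"
  shows "\<exists>a b::'k. a \<noteq> j \<and> b \<noteq> j \<and> a \<noteq> b"
proof -
  have "2 \<le> card (UNIV - {j::'k})" using assms by (simp add: card_Diff_singleton)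
  then obtain T where T: "T \<subseteq> UNIV - {j}" "card T = 2" by (rule obtain_subset_with_card_n)
  then obtain a b where "T = {a, b}" "a \<noteq> b" by (auto simp: card_2_iff)
  then show ?thesis using T(1) by blast
qed

lemma logadd_zero:
  fixes G :: "real \<Rightarrow> real"
  assumes add: "\<And>x1 x2. 0 < x1 \<Longrightarrow> x1 \<le> 1 \<Longrightarrow> 0 < x2 \<Longrightarrow> x2 \<le> 1 \<Longrightarrow> G (x1 * x2) = G x1 + G x2"
    and bnd: "\<And>x. 0 < x \<Longrightarrow> x \<le> 1 \<Longrightarrow> \<bar>G x\<bar> \<le> C"
    and x: "0 < x" "x \<le> 1"
  shows "G x = 0"
proof (rule ccontr)
  assume nz: "G x \<noteq> 0"
  have pw: "\<And>n. G (x ^ Suc n) = real (Suc n) * G x"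
  proof -
    fix n show "G (x ^ Suc n) = real (Suc n) * G x"
    proof (induction n)
      case 0 then show ?case by simp
    next
      case (Suc n)
      have "G (x ^ Suc (Suc n)) = G (x * x ^ Suc n)" by simp
      also have "\<dots> = G x + G (x ^ Suc n)"
        using x power_le_one[of x "Suc n"] zero_less_power[of x "Suc n"] by (intro add) simp_all
      also have "\<dots> = real (Suc (Suc n)) * G x" using Suc by (simp add: algebra_simps)
      finally show ?case .
    qed
  qed
  obtain n :: nat where n: "C / \<bar>G x\<bar> < real n" using reals_Archimedean2 by blast
  have "\<bar>G (x ^ Suc n)\<bar> \<le> C"
    using x power_le_one[of x "Suc n"] zero_less_power[of x "Suc n"] by (intro bnd) simp_all
  then have "real (Suc n) * \<bar>G x\<bar> \<le> C" using pw[of n] by (simp add: abs_mult)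
  moreover have "C < real n * \<bar>G x\<bar>" using n nz by (simp add: divide_less_eq)
  ultimately show False using nz by (simp add: algebra_simps)
qed

lemma g_const_pos:
  fixes L :: "real^'k::finite \<Rightarrow> real" and f :: "'k \<Rightarrow> real^'k \<Rightarrow> real" and g :: "'k \<Rightarrow> real \<Rightarrow> real"
  assumes cons: "\<forall>p\<in>posorth. (L has_derivative (\<lambda>h. \<Sum>k\<in>UNIV. f k p * h$k)) (at p within posorth)"
    and grep: "\<And>k p. p \<in> posorth \<Longrightarrow> f k p = g k (p$k / mass p)"
    and K3: "CARD('k) \<ge> 3"
    and bnd: "\<And>x. 0 \<le> x \<Longrightarrow> x \<le> 1 \<Longrightarrow> \<bar>g j x\<bar> \<le> C"
    and x: "0 < x" "x \<le> 1"
  shows "g j x = g j 1"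
proof -
  obtain a b where ne: "a \<noteq> j" "b \<noteq> j" "a \<noteq> b" using two_others[OF K3] by blast
  let ?G = "\<lambda>x. g j x - g j 1"
  have add: "?G (x1 * x2) = ?G x1 + ?G x2" if x1: "0 < x1" "x1 \<le> 1" and x2: "0 < x2" "x2 \<le> 1" for x1 x2
  proof -
    have B: "g j (x1 / ((1/x2 - 1) + (1 - x1) + x1)) - g j (((1 - x1) + x1) / ((1/x2 - 1) + (1 - x1) + x1))
        = g j (x1 / ((1 - x1) + x1)) - g j 1"
      using x1 x2 ne by (intro claimB[OF cons grep, of a j b]) auto
    have "x1 / ((1/x2 - 1) + (1 - x1) + x1) = x1 * x2" using x2 by simp
    moreover have "((1 - x1) + x1) / ((1/x2 - 1) + (1 - x1) + x1) = x2" using x2 by simp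
    ultimately show ?thesis using B by simp
  qed
  have bnd2: "\<bar>?G y\<bar> \<le> 2 * C" if "0 < y" "y \<le> 1" for y
  proof -
    have "\<bar>g j y\<bar> \<le> C" "\<bar>g j 1\<bar> \<le> C" using bnd that by auto
    then show ?thesis by linarith
  qed
  have "?G x = 0"
    by (rule logadd_zero[of ?G "2*C" x, OF add bnd2 x])
  then show ?thesis by simp
qed


lemma Llin:
  fixes L :: "real^'k::finite \<Rightarrow> real" and f :: "'k \<Rightarrow> real^'k \<Rightarrow> real" and g :: "'k \<Rightarrow> real \<Rightarrow> real"
  assumes Ldef: "\<And>p. L p = (\<Sum>k\<in>UNIV. p$k * f k p)"
    and grep: "\<And>k p. p \<in> posorth \<Longrightarrow> f k p = g k (p$k / mass p)"
    and c: "\<And>k x. 0 < x \<Longrightarrow> x \<le> 1 \<Longrightarrow> g k x = c k"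
    and p: "p \<in> posorth"
  shows "L p = (\<Sum>k\<in>UNIV. p$k * c k)"
  unfolding Ldef
proof (rule sum.cong[OF refl])
  fix k
  show "p$k * f k p = p$k * c k"
  proof (cases "p$k = 0")
    case True then show ?thesis by simp
  next
    case False
    then have pk: "0 < p$k" using posorth_comp[OF p, of k] by simp
    have "p$k \<le> mass p" by (rule posorth_mass_ge[OF p])
    then have "0 < p$k / mass p" "p$k / mass p \<le> 1" using pk by auto
    then show ?thesis using grep[OF p, of k] c by simp
  qed
qed

lemma g_zero:
  fixes L :: "real^'k::finite \<Rightarrow> real" and f :: "'k \<Rightarrow> real^'k \<Rightarrow> real" and g :: "'k \<Rightarrow> real \<Rightarrow> real"
  assumes cons: "\<forall>p\<in>posorth. (L has_derivative (\<lambda>h. \<Sum>k\<in>UNIV. f k p * h$k)) (at p within posorth)"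
    and Ldef: "\<And>p. L p = (\<Sum>k\<in>UNIV. p$k * f k p)"
    and grep: "\<And>k p. p \<in> posorth \<Longrightarrow> f k p = g k (p$k / mass p)"
    and c: "\<And>k x. 0 < x \<Longrightarrow> x \<le> 1 \<Longrightarrow> g k x = c k"
    and ne: "a \<noteq> j"
  shows "g j 0 = c j"
proof -
  let ?S = "{0::real..}"
  have mem: "\<And>s. s \<in> ?S \<Longrightarrow> uv a + s *\<^sub>R uv j \<in> posorth"
    by (intro posorthI) simp_all
  have d1: "((\<lambda>s. L (uv a + s *\<^sub>R uv j)) has_field_derivative f j (uv a + 0 *\<^sub>R uv j)) (at 0 within ?S)"
    by (rule deriv_line_uv[OF cons mem]) auto
  have "f j (uv a + 0 *\<^sub>R uv j) = g j 0"
    using grep[OF mem[of 0]] ne by simp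
  note d1 = d1[unfolded this]
  have lin: "L (uv a + s *\<^sub>R uv j) = c a + s * c j" if "s \<in> ?S" for s
  proof -
    have "L (uv a + s *\<^sub>R uv j) = (\<Sum>k\<in>UNIV. (uv a + s *\<^sub>R uv j)$k * c k)"
      by (rule Llin[OF Ldef grep c mem[OF that]])
    also have "\<dots> = (\<Sum>k\<in>UNIV. (if k = a then c k else 0)) + (\<Sum>k\<in>UNIV. (if k = j then s * c k else 0))"
      unfolding sum.distrib[symmetric] by (rule sum.cong) (auto simp: distrib_right)
    also have "\<dots> = c a + s * c j" by simp
    finally show ?thesis .
  qed
  have d2: "((\<lambda>s. c a + s * c j) has_field_derivative g j 0) (at 0 within ?S)"
    by (rule has_field_derivative_transform_within[OF d1, where d=1]) (auto simp: lin)
  have d3: "((\<lambda>s. c a + s * c j) has_field_derivative c j) (at 0 within ?S)"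
    by (auto intro!: derivative_eq_intros)
  have nb: "at (0::real) within ?S \<noteq> bot"
    by (simp add: at_within_Ici_at_right)
  show ?thesis
    using vector_derivative_unique_within[OF nb d2[unfolded has_real_derivative_iff_has_vector_derivative]
        d3[unfolded has_real_derivative_iff_has_vector_derivative]] by simp
qed

lemma converse_dir:
  fixes L :: "real^'k::finite \<Rightarrow> real" and f :: "'k \<Rightarrow> real^'k \<Rightarrow> real" and g :: "'k \<Rightarrow> real \<Rightarrow> real"
  assumes Ldef: "\<And>p. L p = (\<Sum>k\<in>UNIV. p$k * f k p)"
    and grep: "\<And>k p. p \<in> posorth \<Longrightarrow> f k p = g k (p$k / mass p)"
    and c: "\<And>k x. 0 \<le> x \<Longrightarrow> x \<le> 1 \<Longrightarrow> g k x = c k"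
  shows "\<forall>p\<in>posorth. (L has_derivative (\<lambda>h. \<Sum>k\<in>UNIV. f k p * h$k)) (at p within posorth)"
proof
  fix p :: "real^'k" assume p: "p \<in> posorth"
  have fp: "f k p = c k" for k
  proof -
    have "0 \<le> p$k" "p$k \<le> mass p" using posorth_comp[OF p] posorth_mass_ge[OF p] by auto
    moreover have "0 < mass p" by (rule posorth_mass_pos[OF p])
    ultimately have "0 \<le> p$k / mass p" "p$k / mass p \<le> 1" by auto
    then show ?thesis using grep[OF p, of k] c by simp
  qed
  have bl: "bounded_linear (\<lambda>q::real^'k. \<Sum>k\<in>UNIV. q$k * c k)"
    by (intro bounded_linear_sum) (rule bounded_linear_compose[OF bounded_linear_mult_left bounded_linear_vec_nth])
  have "((\<lambda>q::real^'k. \<Sum>k\<in>UNIV. q$k * c k) has_derivative (\<lambda>h. \<Sum>k\<in>UNIV. h$k * c k)) (at p within posorth)"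
    by (rule bounded_linear.has_derivative[OF bl has_derivative_ident])
  then have "(L has_derivative (\<lambda>h. \<Sum>k\<in>UNIV. h$k * c k)) (at p within posorth)"
    by (rule has_derivative_transform_within[where d=1, OF _ _ p])
       (auto simp: Llin[OF Ldef grep c])
  then show "(L has_derivative (\<lambda>h. \<Sum>k\<in>UNIV. f k p * h$k)) (at p within posorth)"
    by (rule has_derivative_eq_rhs) (simp add: fp mult.commute)
qed


theorem lemma7p3:
  fixes M :: "'z measure" and D :: "'k::finite \<Rightarrow> 'z measure" and N :: nat
    and loss :: "'h \<Rightarrow> 'z \<Rightarrow> real" and Alg :: "(nat \<Rightarrow> 'z) \<Rightarrow> 'h"
    and g :: "'k \<Rightarrow> real \<Rightarrow> real"
  assumes K3: "CARD('k) \<ge> 3"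
    and N1: "N \<ge> 1"
    and prob: "\<And>k. prob_space (D k)"
    and sets_D: "\<And>k. sets (D k) = sets M"
    and integ: "\<And>q k. q \<in> prob_simplex \<Longrightarrow>
        integrable (PiM {..<N} (\<lambda>_. mixture M D q) \<Otimes>\<^sub>M D k) (\<lambda>(S, z). loss (Alg S) z)"
    and g_rep: "\<And>k p. p \<in> posorth \<Longrightarrow> ffun M D N loss Alg k p = g k (p$k / mass p)"
  shows "conservation M D N loss Alg \<longleftrightarrow> (\<forall>k. \<exists>c. \<forall>x\<in>{0..1}. g k x = c)"
proof -
  let ?L = "Lsame M D N loss Alg"
  let ?f = "\<lambda>k. ffun M D N loss Alg k"
  have Ldef: "\<And>p. ?L p = (\<Sum>k\<in>UNIV. p$k * ?f k p)" by (simp add: Lsame_def)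
  have cdef: "conservation M D N loss Alg \<longleftrightarrow>
      (\<forall>p\<in>posorth. (?L has_derivative (\<lambda>h. \<Sum>k\<in>UNIV. ?f k p * h$k)) (at p within posorth))"
    by (simp add: conservation_def)
  show ?thesis
  proof
    assume "conservation M D N loss Alg"
    then have cons: "\<forall>p\<in>posorth. (?L has_derivative (\<lambda>h. \<Sum>k\<in>UNIV. ?f k p * h$k)) (at p within posorth)"
      using cdef by blast
    have bnd: "\<exists>C. \<forall>x. 0 \<le> x \<longrightarrow> x \<le> 1 \<longrightarrow> \<bar>g j x\<bar> \<le> C" for j
    proof -
      obtain C where C: "\<forall>q\<in>prob_simplex. \<bar>ebar M D N loss Alg j q\<bar> \<le> C"
        using ebar_bounded[OF prob sets_D integ] by blast
      obtain a b where ne: "a \<noteq> j" "b \<noteq> j" "a \<noteq> b" using two_others[OF K3, of j] by blast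
      have "\<bar>g j x\<bar> \<le> C" if x: "0 \<le> x" "x \<le> 1" for x
      proof -
        define p where "p = x *\<^sub>R uv j + (1 - x) *\<^sub>R uv a"
        have mp: "mass p = 1" by (simp add: p_def)
        have pp: "p \<in> posorth" unfolding p_def using x by (intro posorthI) simp_all
        have ps: "p \<in> prob_simplex"
          unfolding prob_simplex_def using posorth_comp[OF pp] mp[unfolded mass_def] by blast
        have pj: "p$j = x" using ne by (simp add: p_def)
        have "g j x = ?f j p" using g_rep[OF pp, of j] pj mp by simp
        also have "\<dots> = ebar M D N loss Alg j p" by (simp add: ffun_def mp)
        finally have gx: "g j x = ebar M D N loss Alg j p" .
        have "\<bar>ebar M D N loss Alg j p\<bar> \<le> C" using C ps by blast
        then show ?thesis unfolding gx .
      qed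
      then show ?thesis by blast
    qed
    have pos: "g j x = g j 1" if "0 < x" "x \<le> 1" for j x
    proof -
      obtain C where C: "\<forall>x. 0 \<le> x \<longrightarrow> x \<le> 1 \<longrightarrow> \<bar>g j x\<bar> \<le> C" using bnd by blast
      have C': "\<And>x. 0 \<le> x \<Longrightarrow> x \<le> 1 \<Longrightarrow> \<bar>g j x\<bar> \<le> C" using C by blast
      show ?thesis
        by (rule g_const_pos[OF cons g_rep K3 C' that])
    qed
    show "\<forall>k. \<exists>c. \<forall>x\<in>{0..1}. g k x = c"
    proof
      fix k :: 'k
      obtain a b where ne: "a \<noteq> k" "b \<noteq> k" "a \<noteq> b" using two_others[OF K3, of k] by blast
      have z: "g k 0 = g k 1"
        by (rule g_zero[OF cons Ldef g_rep pos ne(1)])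
      have "\<forall>x\<in>{0..1}. g k x = g k 1"
      proof
        fix x :: real assume "x \<in> {0..1}"
        then have x: "0 \<le> x" "x \<le> 1" by simp_all
        show "g k x = g k 1"
        proof (cases "x = 0")
          case True then show ?thesis using z by simp
        next
          case False then have "0 < x" using x by simp
          then show ?thesis using pos x(2) by blast
        qed
      qed
      then show "\<exists>c. \<forall>x\<in>{0..1}. g k x = c" by blast
    qed
  next
    assume "\<forall>k. \<exists>c. \<forall>x\<in>{0..1}. g k x = c"
    from choice[OF this] obtain c where c: "\<forall>k. \<forall>x\<in>{0..1}. g k x = c k" by blast
    have "\<forall>p\<in>posorth. (?L has_derivative (\<lambda>h. \<Sum>k\<in>UNIV. ?f k p * h$k)) (at p within posorth)"
    proof (rule converse_dir[OF Ldef g_rep, where c=c])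
      fix k :: 'k and x :: real
      assume "0 \<le> x" "x \<le> 1"
      then show "g k x = c k" using c by simp
    qed
    then show "conservation M D N loss Alg" using cdef by blast
  qed
qed

end
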